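(* Let $R$ be a ring and let $V$ be an $(R,R)$-bimodule which is also an idempotent-free ring (not necessarily with identity), and let $S=I(R;V)$ be the ideal extension of $R$ by $V$. The following are equivalent: (1) $S$ is uniquely weakly $I'$-clean for some ideal $I'$ of $S$; (2) (a) $R$ is uniquely weakly $I$-clean for some ideal $I$ of $R$, and (b) for every $e\in Idem(R)$ and every $v\in V$, $ev=ve$.
   Context: All rings other than $V$ are associative with identity; $Idem(R)$ is the set of idempotents. $V$ is an $(R,R)$-bimodule carrying an associative multiplication compatible with the bimodule structure (i.e. $(rv)w=r(vw)$, $(vr)w=v(rw)$, $(vw)r=v(wr)$ for $r\in R$, $v,w\in V$); $V$ is idempotent free if $v^2=v$ implies $v=0$. The ideal extension $I(R;V)$ is the additive group $R\oplus V$ with multiplication $(r,v)(s,w)=(rs,\,rw+vs+vw)$; it is a ring with identity $(1,0)$. For an ideal $I$ of a ring $A$, $A$ is uniquely weakly $I$-clean if for every $x\in A$ there exists a unique idempotent $e\in A$ with $x-e\in I$ or $x+e\in I$. *)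

theory Defs
  imports Main
begin

text \<open>V is an abelian group with a left R-action lm, a right R-action rm and an
  associative (not necessarily unital) multiplication mv.\<close>

definition bimodule_ring ::
  "('r::ring_1 \<Rightarrow> 'v::ab_group_add \<Rightarrow> 'v) \<Rightarrow> ('v \<Rightarrow> 'r \<Rightarrow> 'v) \<Rightarrow> ('v \<Rightarrow> 'v \<Rightarrow> 'v) \<Rightarrow> bool" where
  "bimodule_ring lm rm mv \<longleftrightarrow>
     \<comment> \<open>left module\<close>
     (\<forall>r v w. lm r (v + w) = lm r v + lm r w) \<and>
     (\<forall>r s v. lm (r + s) v = lm r v + lm s v) \<and>
     (\<forall>r s v. lm (r * s) v = lm r (lm s v)) \<and>
     (\<forall>v. lm 1 v = v) \<and>
     \<comment> \<open>right module\<close>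
     (\<forall>r v w. rm (v + w) r = rm v r + rm w r) \<and>
     (\<forall>r s v. rm v (r + s) = rm v r + rm v s) \<and>
     (\<forall>r s v. rm v (r * s) = rm (rm v r) s) \<and>
     (\<forall>v. rm v 1 = v) \<and>
     \<comment> \<open>bimodule\<close>
     (\<forall>r s v. rm (lm r v) s = lm r (rm v s)) \<and>
     \<comment> \<open>ring structure on V (without identity)\<close>
     (\<forall>u v w. mv (mv u v) w = mv u (mv v w)) \<and>
     (\<forall>u v w. mv u (v + w) = mv u v + mv u w) \<and>
     (\<forall>u v w. mv (u + v) w = mv u w + mv v w) \<and>
     \<comment> \<open>compatibility\<close>
     (\<forall>r v w. mv (lm r v) w = lm r (mv v w)) \<and>
     (\<forall>r v w. mv (rm v r) w = mv v (lm r w)) \<and>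
     (\<forall>r v w. rm (mv v w) r = mv v (rm w r))"

definition idempotent_free :: "('v::ab_group_add \<Rightarrow> 'v \<Rightarrow> 'v) \<Rightarrow> bool" where
  "idempotent_free mv \<longleftrightarrow> (\<forall>v. mv v v = v \<longrightarrow> v = 0)"

definition is_ideal :: "'r::ring_1 set \<Rightarrow> bool" where
  "is_ideal I \<longleftrightarrow> 0 \<in> I \<and> (\<forall>a\<in>I. \<forall>b\<in>I. a - b \<in> I) \<and>
     (\<forall>a\<in>I. \<forall>r. r * a \<in> I \<and> a * r \<in> I)"

definition Idem :: "'r::ring_1 set" where
  "Idem = {e. e * e = e}"

definition uniquely_weakly_clean :: "'r::ring_1 set \<Rightarrow> bool" where
  "uniquely_weakly_clean I \<longleftrightarrow> (\<forall>x. \<exists>!e. e \<in> Idem \<and> (x - e \<in> I \<or> x + e \<in> I))"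

definition ext_add :: "'r::ring_1 \<times> 'v::ab_group_add \<Rightarrow> 'r \<times> 'v \<Rightarrow> 'r \<times> 'v" where
  "ext_add x y = (fst x + fst y, snd x + snd y)"

definition ext_sub :: "'r::ring_1 \<times> 'v::ab_group_add \<Rightarrow> 'r \<times> 'v \<Rightarrow> 'r \<times> 'v" where
  "ext_sub x y = (fst x - fst y, snd x - snd y)"

definition ext_mult ::
  "('r::ring_1 \<Rightarrow> 'v::ab_group_add \<Rightarrow> 'v) \<Rightarrow> ('v \<Rightarrow> 'r \<Rightarrow> 'v) \<Rightarrow> ('v \<Rightarrow> 'v \<Rightarrow> 'v)
     \<Rightarrow> 'r \<times> 'v \<Rightarrow> 'r \<times> 'v \<Rightarrow> 'r \<times> 'v" where
  "ext_mult lm rm mv x y =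
     (fst x * fst y, lm (fst x) (snd y) + rm (snd x) (fst y) + mv (snd x) (snd y))"

definition ext_is_ideal ::
  "('r::ring_1 \<Rightarrow> 'v::ab_group_add \<Rightarrow> 'v) \<Rightarrow> ('v \<Rightarrow> 'r \<Rightarrow> 'v) \<Rightarrow> ('v \<Rightarrow> 'v \<Rightarrow> 'v)
     \<Rightarrow> ('r \<times> 'v) set \<Rightarrow> bool" where
  "ext_is_ideal lm rm mv J \<longleftrightarrow> (0, 0) \<in> J \<and> (\<forall>a\<in>J. \<forall>b\<in>J. ext_sub a b \<in> J) \<and>
     (\<forall>a\<in>J. \<forall>s. ext_mult lm rm mv s a \<in> J \<and> ext_mult lm rm mv a s \<in> J)"

definition ext_Idem ::
  "('r::ring_1 \<Rightarrow> 'v::ab_group_add \<Rightarrow> 'v) \<Rightarrow> ('v \<Rightarrow> 'r \<Rightarrow> 'v) \<Rightarrow> ('v \<Rightarrow> 'v \<Rightarrow> 'v)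
     \<Rightarrow> ('r \<times> 'v) set" where
  "ext_Idem lm rm mv = {e. ext_mult lm rm mv e e = e}"

definition ext_uniquely_weakly_clean ::
  "('r::ring_1 \<Rightarrow> 'v::ab_group_add \<Rightarrow> 'v) \<Rightarrow> ('v \<Rightarrow> 'r \<Rightarrow> 'v) \<Rightarrow> ('v \<Rightarrow> 'v \<Rightarrow> 'v)
     \<Rightarrow> ('r \<times> 'v) set \<Rightarrow> bool" where
  "ext_uniquely_weakly_clean lm rm mv J \<longleftrightarrow>
     (\<forall>x. \<exists>!e. e \<in> ext_Idem lm rm mv \<and> (ext_sub x e \<in> J \<or> ext_add x e \<in> J))"

end

theory Submission
  imports Defs
begin

locale bm =
  fixes lm :: "'r::ring_1 \<Rightarrow> 'v::ab_group_add \<Rightarrow> 'v"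
    and rm :: "'v \<Rightarrow> 'r \<Rightarrow> 'v"
    and mv :: "'v \<Rightarrow> 'v \<Rightarrow> 'v"
  assumes B: "bimodule_ring lm rm mv"
begin

lemma lm_add: "lm r (v + w) = lm r v + lm r w" using B unfolding bimodule_ring_def by simp
lemma lm_radd: "lm (r + s) v = lm r v + lm s v" using B unfolding bimodule_ring_def by simp
lemma lm_mult: "lm (r * s) v = lm r (lm s v)" using B unfolding bimodule_ring_def by simp
lemma lm_one: "lm 1 v = v" using B unfolding bimodule_ring_def by simp
lemma rm_add: "rm (v + w) r = rm v r + rm w r" using B unfolding bimodule_ring_def by simp
lemma rm_radd: "rm v (r + s) = rm v r + rm v s" using B unfolding bimodule_ring_def by simp
lemma rm_mult: "rm v (r * s) = rm (rm v r) s" using B unfolding bimodule_ring_def by simp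
lemma rm_one: "rm v 1 = v" using B unfolding bimodule_ring_def by simp
lemma lm_rm: "rm (lm r v) s = lm r (rm v s)" using B unfolding bimodule_ring_def by simp
lemma mv_assoc: "mv (mv u v) w = mv u (mv v w)" using B unfolding bimodule_ring_def by simp
lemma mv_addR: "mv u (v + w) = mv u v + mv u w" using B unfolding bimodule_ring_def by simp
lemma mv_addL: "mv (u + v) w = mv u w + mv v w" using B unfolding bimodule_ring_def by simp
lemma mv_lm: "mv (lm r v) w = lm r (mv v w)" using B unfolding bimodule_ring_def by simp
lemma mv_rm: "mv (rm v r) w = mv v (lm r w)" using B unfolding bimodule_ring_def by simp
lemma rm_mv: "rm (mv v w) r = mv v (rm w r)" using B unfolding bimodule_ring_def by simp

lemma lm_zero[simp]: "lm r 0 = 0"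
  using lm_add[of r 0 0] by simp
lemma lm_zeroR[simp]: "lm 0 v = 0"
  using lm_radd[of 0 0 v] by simp
lemma rm_zero[simp]: "rm 0 r = 0"
  using rm_add[of 0 0 r] by simp
lemma rm_zeroR[simp]: "rm v 0 = 0"
  using rm_radd[of v 0 0] by simp
lemma mv_zero1[simp]: "mv 0 v = 0"
  using mv_addL[of 0 0 v] by simp
lemma mv_zero2[simp]: "mv v 0 = 0"
  using mv_addR[of v 0 0] by simp

lemma lm_minus: "lm r (- v) = - lm r v"
  using add.inverse_unique[of "lm r v" "lm r (-v)"] lm_add[of r v "-v"] by simp
lemma lm_rminus: "lm (- r) v = - lm r v"
  using add.inverse_unique[of "lm r v" "lm (-r) v"] lm_radd[of r "-r" v] by simp
lemma rm_minus: "rm (- v) r = - rm v r"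
  using add.inverse_unique[of "rm v r" "rm (-v) r"] rm_add[of v "-v" r] by simp
lemma rm_rminus: "rm v (- r) = - rm v r"
  using add.inverse_unique[of "rm v r" "rm v (-r)"] rm_radd[of v r "-r"] by simp
lemma mv_minus1: "mv (- u) v = - mv u v"
  using add.inverse_unique[of "mv u v" "mv (-u) v"] mv_addL[of u "-u" v] by simp
lemma mv_minus2: "mv u (- v) = - mv u v"
  using add.inverse_unique[of "mv u v" "mv u (-v)"] mv_addR[of u v "-v"] by simp

lemma lm_diff: "lm r (v - w) = lm r v - lm r w"
  using lm_add[of r v "-w"] lm_minus by simp
lemma lm_rdiff: "lm (r - s) v = lm r v - lm s v"
  using lm_radd[of r "-s" v] lm_rminus by simp
lemma rm_diff: "rm (v - w) r = rm v r - rm w r"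
  using rm_add[of v "-w" r] rm_minus by simp
lemma rm_rdiff: "rm v (r - s) = rm v r - rm v s"
  using rm_radd[of v r "-s"] rm_rminus by simp
lemma mv_diff1: "mv (u - w) v = mv u v - mv w v"
  using mv_addL[of u "-w" v] mv_minus1 by simp
lemma mv_diff2: "mv u (v - w) = mv u v - mv u w"
  using mv_addR[of u v "-w"] mv_minus2 by simp

abbreviation M where "M \<equiv> ext_mult lm rm mv"

lemma rdist: "M (ext_sub a b) c = ext_sub (M a c) (M b c)"
  by (cases a; cases b; cases c)
     (simp add: ext_mult_def ext_sub_def lm_rdiff rm_diff mv_diff1 algebra_simps)

lemma ldist: "M c (ext_sub a b) = ext_sub (M c a) (M c b)"
  by (cases a; cases b; cases c)
     (simp add: ext_mult_def ext_sub_def lm_diff rm_rdiff mv_diff2 algebra_simps)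

end

lemma uniq:
  assumes "ext_uniquely_weakly_clean lm rm mv J"
    and "h1 \<in> ext_Idem lm rm mv" "ext_sub x h1 \<in> J \<or> ext_add x h1 \<in> J"
    and "h2 \<in> ext_Idem lm rm mv" "ext_sub x h2 \<in> J \<or> ext_add x h2 \<in> J"
  shows "h1 = h2"
  using assms unfolding ext_uniquely_weakly_clean_def by blast

lemma uniqR:
  assumes "uniquely_weakly_clean I"
    and "h1 \<in> Idem" "x - h1 \<in> I \<or> x + h1 \<in> I"
    and "h2 \<in> Idem" "x - h2 \<in> I \<or> x + h2 \<in> I"
  shows "h1 = h2"
  using assms unfolding uniquely_weakly_clean_def by blast

theorem mainTheorem14:
  fixes lm :: "'r::ring_1 \<Rightarrow> 'v::ab_group_add \<Rightarrow> 'v"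
    and rm :: "'v \<Rightarrow> 'r \<Rightarrow> 'v"
    and mv :: "'v \<Rightarrow> 'v \<Rightarrow> 'v"
  assumes "bimodule_ring lm rm mv"
    and "idempotent_free mv"
  shows "(\<exists>J. ext_is_ideal lm rm mv J \<and> ext_uniquely_weakly_clean lm rm mv J) \<longleftrightarrow>
         ((\<exists>I::'r set. is_ideal I \<and> uniquely_weakly_clean I) \<and>
          (\<forall>e\<in>(Idem::'r set). \<forall>v. lm e v = rm v e))"
proof -
  interpret bm lm rm mv using assms(1) by unfold_locales
  have IF: "\<And>v. mv v v = v \<Longrightarrow> v = 0" using assms(2) unfolding idempotent_free_def by blast
  have idem0: "\<And>e. e \<in> (Idem::'r set) \<Longrightarrow> (e, 0) \<in> ext_Idem lm rm mv"
    by (simp add: Idem_def ext_Idem_def ext_mult_def)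
  show ?thesis
  proof
    assume "\<exists>J. ext_is_ideal lm rm mv J \<and> ext_uniquely_weakly_clean lm rm mv J"
    then obtain J where hJ: "ext_is_ideal lm rm mv J" and hU: "ext_uniquely_weakly_clean lm rm mv J"
      by blast
    have J0: "(0,0) \<in> J" using hJ unfolding ext_is_ideal_def by blast
    have Jsub: "\<And>a b. a \<in> J \<Longrightarrow> b \<in> J \<Longrightarrow> ext_sub a b \<in> J" using hJ unfolding ext_is_ideal_def by blast
    have JL: "\<And>a s. a \<in> J \<Longrightarrow> M s a \<in> J" using hJ unfolding ext_is_ideal_def by blast
    have JR: "\<And>a s. a \<in> J \<Longrightarrow> M a s \<in> J" using hJ unfolding ext_is_ideal_def by blast
    have nil: "(0, w) \<in> J" if ww: "mv w w = 0" for w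
    proof -
      define x where "x = ((0::'r), w)"
      have xx: "M x x = (0,0)" using ww by (simp add: x_def ext_mult_def)
      obtain h where hI: "h \<in> ext_Idem lm rm mv" and hc: "ext_sub x h \<in> J \<or> ext_add x h \<in> J"
        using hU unfolding ext_uniquely_weakly_clean_def by blast
      have hh: "M h h = h" using hI by (simp add: ext_Idem_def)
      have hJ': "h \<in> J"
        using hc
      proof
        assume j: "ext_sub x h \<in> J"
        define j where "j = ext_sub x h"
        have "h = ext_sub x j" by (cases h, simp add: j_def x_def ext_sub_def)
        hence "h = ext_sub (M x (ext_sub x j)) (M j (ext_sub x j))"
          using hh rdist by metis
        also have "M x (ext_sub x j) = ext_sub (0,0) (M x j)" using ldist xx by metis
        finally show "h \<in> J" using Jsub JL JR J0 j j_def by metis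
      next
        assume j: "ext_add x h \<in> J"
        define j where "j = ext_add x h"
        have "h = ext_sub j x" by (cases h, simp add: j_def x_def ext_sub_def ext_add_def)
        hence "h = ext_sub (M j (ext_sub j x)) (M x (ext_sub j x))"
          using hh rdist by metis
        also have "M x (ext_sub j x) = ext_sub (M x j) (0,0)" using ldist xx by metis
        finally show "h \<in> J" using Jsub JL JR J0 j j_def by metis
      qed
      have "(0,0) \<in> ext_Idem lm rm mv" by (simp add: ext_Idem_def ext_mult_def)
      moreover have "ext_sub (0,0) (0,0) \<in> J" using J0 by (simp add: ext_sub_def)
      moreover have "ext_sub (0,0) h \<in> J" using Jsub J0 hJ' by blast
      ultimately have "h = (0,0)" using uniq[OF hU] hI by blast
      thus ?thesis using hc by (simp add: x_def ext_sub_def ext_add_def)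
    qed
    have comm: "lm e v = rm v e" if e: "e \<in> (Idem::'r set)" for e v
    proof -
      have ee: "e * e = e" using e by (simp add: Idem_def)
      have z1: "(1 - e) * e = 0" "e * (1 - e) = 0" using ee by (simp_all add: algebra_simps)
      define v1 where "v1 = rm (lm e v) (1 - e)"
      have a1: "lm e v1 = v1" unfolding v1_def by (simp add: lm_rm[symmetric] lm_mult[symmetric] ee)
      have b1: "rm v1 e = 0" unfolding v1_def by (simp add: rm_mult[symmetric] z1)
      have c1: "mv v1 v1 = 0"
      proof -
        have "lm (1 - e) v1 = 0" unfolding v1_def by (simp add: lm_rm[symmetric] lm_mult[symmetric] mult.assoc z1)
        hence "mv (rm (lm e v) (1 - e)) v1 = 0" by (simp add: mv_rm)
        thus ?thesis by (simp add: v1_def)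
      qed
      have "(e, v1) \<in> ext_Idem lm rm mv" using a1 b1 c1 ee by (simp add: ext_Idem_def ext_mult_def)
      moreover have "ext_sub (e,0) (e, v1) \<in> J"
        using Jsub[OF J0 nil[OF c1]] by (simp add: ext_sub_def)
      moreover have "ext_sub (e,0) (e, 0) \<in> J" using J0 by (simp add: ext_sub_def)
      ultimately have "(e, v1) = (e, 0)" using uniq[OF hU] idem0[OF e] by blast
      hence E1: "lm e v = rm (lm e v) e" unfolding v1_def by (simp add: rm_rdiff rm_one)
      define v2 where "v2 = lm (1 - e) (rm v e)"
      have a2: "lm e v2 = 0" unfolding v2_def by (simp add: lm_mult[symmetric] z1)
      have b2: "rm v2 e = v2" unfolding v2_def by (simp add: lm_rm rm_mult[symmetric] ee)
      have c2: "mv v2 v2 = 0"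
      proof -
        have "mv v2 v2 = lm (1 - e) (mv (rm v e) v2)" using mv_lm[of "1 - e" "rm v e" v2] by (simp add: v2_def)
        also have "\<dots> = 0" by (simp add: mv_rm a2)
        finally show ?thesis .
      qed
      have "(e, v2) \<in> ext_Idem lm rm mv" using a2 b2 c2 ee by (simp add: ext_Idem_def ext_mult_def)
      moreover have "ext_sub (e,0) (e, v2) \<in> J"
        using Jsub[OF J0 nil[OF c2]] by (simp add: ext_sub_def)
      moreover have "ext_sub (e,0) (e, 0) \<in> J" using J0 by (simp add: ext_sub_def)
      ultimately have "(e, v2) = (e, 0)" using uniq[OF hU] idem0[OF e] by blast
      hence E2: "rm v e = lm e (rm v e)" unfolding v2_def by (simp add: lm_rdiff lm_one)
      show ?thesis using E1 E2 lm_rm by metis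
    qed
    define I where "I = {r::'r. (r, 0) \<in> J}"
    have "is_ideal I"
      unfolding is_ideal_def I_def
    proof (intro conjI ballI allI)
      show "0 \<in> {r::'r. (r, 0) \<in> J}" using J0 by simp
    next
      fix a b assume "a \<in> {r. (r, 0) \<in> J}" "b \<in> {r. (r, 0) \<in> J}"
      thus "a - b \<in> {r. (r, 0) \<in> J}" using Jsub by (force simp: ext_sub_def)
    next
      fix a r assume "a \<in> {r. (r, 0) \<in> J}"
      thus "r * a \<in> {r. (r, 0) \<in> J}" using JL[of "(a,0)" "(r,0)"] by (simp add: ext_mult_def)
    next
      fix a r assume "a \<in> {r. (r, 0) \<in> J}"
      thus "a * r \<in> {r. (r, 0) \<in> J}" using JR[of "(a,0)" "(r,0)"] by (simp add: ext_mult_def)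
    qed
    moreover have "uniquely_weakly_clean I"
      unfolding uniquely_weakly_clean_def
    proof
      fix x :: 'r
      obtain h where hI: "h \<in> ext_Idem lm rm mv" and hc: "ext_sub (x,0) h \<in> J \<or> ext_add (x,0) h \<in> J"
        using hU unfolding ext_uniquely_weakly_clean_def by blast
      obtain e u where h: "h = (e, u)" by (cases h)
      have eI: "e \<in> Idem" and uu: "u = lm e u + rm u e + mv u u"
        using hI h by (auto simp: ext_Idem_def ext_mult_def Idem_def)
      have ee: "e * e = e" using eI by (simp add: Idem_def)
      define a where "a = lm e u"
      have r1: "lm e (mv u u) = - a"
      proof -
        have "a = lm e (lm e u + rm u e + mv u u)" using uu a_def by simp
        also have "\<dots> = a + a + lm e (mv u u)"
        proof -
          have h1: "lm e (lm e u) = lm e u" by (simp add: lm_mult[symmetric] ee)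
          have h2: "lm e (rm u e) = lm e u" using h1 comm[OF eI, of u] by simp
          show ?thesis by (simp add: lm_add h1 h2 a_def)
        qed
        finally show ?thesis by (simp add: add.assoc eq_neg_iff_add_eq_0 add.commute)
      qed
      have "mv a a = - a"
      proof -
        have "mv a a = lm e (mv u (rm u e))" by (metis a_def mv_lm comm[OF eI])
        also have "\<dots> = lm e (lm e (mv u u))" by (metis rm_mv comm[OF eI])
        also have "\<dots> = - a" using r1 by (simp add: lm_mult[symmetric] ee lm_minus a_def)
        finally show ?thesis .
      qed
      hence "mv (-a) (-a) = -a" by (simp add: mv_minus1 mv_minus2)
      hence "a = 0" using IF by fastforce
      hence "u = mv u u" using uu comm[OF eI, of u] a_def by simp
      hence u0: "u = 0" using IF by metis
      have ex: "e \<in> Idem \<and> (x - e \<in> I \<or> x + e \<in> I)"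
        using eI hc h u0 by (auto simp: I_def ext_sub_def ext_add_def)
      show "\<exists>!e. e \<in> Idem \<and> (x - e \<in> I \<or> x + e \<in> I)"
      proof (rule ex1I[of _ e])
        show "e \<in> Idem \<and> (x - e \<in> I \<or> x + e \<in> I)" by (rule ex)
      next
        fix e' assume e': "e' \<in> Idem \<and> (x - e' \<in> I \<or> x + e' \<in> I)"
        have c': "ext_sub (x,0) (e',0) \<in> J \<or> ext_add (x,0) (e',0) \<in> J"
          using e' by (auto simp: I_def ext_sub_def ext_add_def)
        show "e' = e" using uniq[OF hU idem0 c' hI hc] e' h u0 by simp
      qed
    qed
    ultimately show "(\<exists>I::'r set. is_ideal I \<and> uniquely_weakly_clean I) \<and>
          (\<forall>e\<in>(Idem::'r set). \<forall>v. lm e v = rm v e)" using comm by blast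
  next
    assume "(\<exists>I::'r set. is_ideal I \<and> uniquely_weakly_clean I) \<and>
          (\<forall>e\<in>(Idem::'r set). \<forall>v. lm e v = rm v e)"
    then obtain I :: "'r set" where hI: "is_ideal I" and hU: "uniquely_weakly_clean I"
      and comm: "\<And>e v. e \<in> Idem \<Longrightarrow> lm e v = rm v e" by blast
    have idem: "u = 0 \<and> e \<in> Idem" if "(e, u) \<in> ext_Idem lm rm mv" for e u
    proof -
      have eI: "e \<in> Idem" and uu: "u = lm e u + rm u e + mv u u"
        using that by (auto simp: ext_Idem_def ext_mult_def Idem_def)
      have ee: "e * e = e" using eI by (simp add: Idem_def)
      define a where "a = lm e u"
      have r1: "lm e (mv u u) = - a"
      proof -
        have "a = lm e (lm e u + rm u e + mv u u)" using uu a_def by simp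
        also have "\<dots> = a + a + lm e (mv u u)"
        proof -
          have h1: "lm e (lm e u) = lm e u" by (simp add: lm_mult[symmetric] ee)
          have h2: "lm e (rm u e) = lm e u" using h1 comm[OF eI, of u] by simp
          show ?thesis by (simp add: lm_add h1 h2 a_def)
        qed
        finally show ?thesis by (simp add: add.assoc eq_neg_iff_add_eq_0 add.commute)
      qed
      have "mv a a = - a"
      proof -
        have "mv a a = lm e (mv u (rm u e))" by (metis a_def mv_lm comm[OF eI])
        also have "\<dots> = lm e (lm e (mv u u))" by (metis rm_mv comm[OF eI])
        also have "\<dots> = - a" using r1 by (simp add: lm_mult[symmetric] ee lm_minus a_def)
        finally show ?thesis .
      qed
      hence "mv (-a) (-a) = -a" by (simp add: mv_minus1 mv_minus2)
      hence "a = 0" using IF by fastforce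
      hence "u = mv u u" using uu comm[OF eI, of u] a_def by simp
      hence u0: "u = 0" using IF by metis
      thus ?thesis using eI by simp
    qed
    define J where "J = {p :: 'r \<times> 'v. fst p \<in> I}"
    have I0: "0 \<in> I" and Isub: "\<And>a b. a \<in> I \<Longrightarrow> b \<in> I \<Longrightarrow> a - b \<in> I"
      and Im: "\<And>a r. a \<in> I \<Longrightarrow> r * a \<in> I \<and> a * r \<in> I"
      using hI unfolding is_ideal_def by auto
    have "ext_is_ideal lm rm mv J"
      unfolding ext_is_ideal_def J_def using I0 Isub Im
      by (auto simp: ext_sub_def ext_mult_def)
    moreover have "ext_uniquely_weakly_clean lm rm mv J"
      unfolding ext_uniquely_weakly_clean_def
    proof
      fix x :: "'r \<times> 'v"
      obtain r v where x: "x = (r, v)" by (cases x)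
      obtain e where eI: "e \<in> Idem" and ec: "r - e \<in> I \<or> r + e \<in> I"
        using hU unfolding uniquely_weakly_clean_def by blast
      show "\<exists>!h. h \<in> ext_Idem lm rm mv \<and> (ext_sub x h \<in> J \<or> ext_add x h \<in> J)"
      proof (rule ex1I[of _ "(e,0)"])
        show "(e,0) \<in> ext_Idem lm rm mv \<and> (ext_sub x (e,0) \<in> J \<or> ext_add x (e,0) \<in> J)"
          using idem0[OF eI] ec x by (auto simp: J_def ext_sub_def ext_add_def)
      next
        fix h assume h: "h \<in> ext_Idem lm rm mv \<and> (ext_sub x h \<in> J \<or> ext_add x h \<in> J)"
        obtain e' u where h': "h = (e', u)" by (cases h)
        have "u = 0" and e'I: "e' \<in> Idem" using idem h h' by auto
        moreover have "r - e' \<in> I \<or> r + e' \<in> I" using h h' x by (auto simp: J_def ext_sub_def ext_add_def)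
        ultimately show "h = (e, 0)" using uniqR[OF hU e'I _ eI ec] h' by simp
      qed
    qed
    ultimately show "\<exists>J. ext_is_ideal lm rm mv J \<and> ext_uniquely_weakly_clean lm rm mv J" by blast
  qed
qed

end
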